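(* Let $Y_0$ and $Y_1$ be real-valued random variables on a common probability space, with marginal cumulative distribution functions $F_0$ and $F_1$, and let $Q_0(u)=\inf\{y\in\mathbb{R}: F_0(y)\geq u\}$ be the left-continuous generalized inverse of $F_0$. Let $U\sim U(0,1)$ be a random variable on the same space with $Y_0=Q_0(U)$ (the joint distribution of $(U,Y_1)$ is otherwise arbitrary). Then for every $0\leq a<b\leq 1$, \[ \sup_{x\in(a,b)}[x-a-F_1(Q_0(x))]_+\leq P(a<U<b,\ Y_0<Y_1)\leq b-a-\sup_{x\in(a,b)}[b-x-1+F_1(Q_0(x))]_+, \] \[ \sup_{x\in(a,b)}[b-x-1+F_1(Q_0(x)-)]_+\leq P(a<U<b,\ Y_0>Y_1)\leq b-a-\sup_{x\in(a,b)}[x-a-F_1(Q_0(x)-)]_+. \] Moreover, given the marginals ($U\sim U(0,1)$, $Y_0=Q_0(U)$, and $Y_1$ with cdf $F_1$): for each of the two lower bounds there exists a joint distribution of $(U,Y_1)$ for which that lower bound is attained (holds with equality), and for each of the two upper bounds and every $\varepsilon>0$ there exists a joint distribution of $(U,Y_1)$ for which the corresponding probability is within $\varepsilon$ of that upper bound. Finally, all four bounds, viewed as functions of $(a,b)$, are nonincreasing and Lipschitz in $a$ and nondecreasing and Lipschitz in $b$.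
   Context: For real $x$, $[x]_+=\max\{x,0\}$. For a cdf $F$, $F(y-)=\lim_{x\nearrow y}F(x)$ denotes its left limit at $y$. *)

theory Defs
  imports "HOL-Probability.Probability"
begin

definition pos_part :: "real \<Rightarrow> real" where
  "pos_part x = max x 0"

definition left_lim :: "(real \<Rightarrow> real) \<Rightarrow> real \<Rightarrow> real" where
  "left_lim F y = Lim (at_left y) F"

definition gen_inv :: "(real \<Rightarrow> real) \<Rightarrow> real \<Rightarrow> real" where
  "gen_inv F u = Inf {y. F y \<ge> u}"

definition lower_lt :: "(real \<Rightarrow> real) \<Rightarrow> (real \<Rightarrow> real) \<Rightarrow> real \<Rightarrow> real \<Rightarrow> real" where
  "lower_lt F0 F1 a b = (SUP x\<in>{a<..<b}. pos_part (x - a - F1 (gen_inv F0 x)))"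

definition upper_lt :: "(real \<Rightarrow> real) \<Rightarrow> (real \<Rightarrow> real) \<Rightarrow> real \<Rightarrow> real \<Rightarrow> real" where
  "upper_lt F0 F1 a b = b - a - (SUP x\<in>{a<..<b}. pos_part (b - x - 1 + F1 (gen_inv F0 x)))"

definition lower_gt :: "(real \<Rightarrow> real) \<Rightarrow> (real \<Rightarrow> real) \<Rightarrow> real \<Rightarrow> real \<Rightarrow> real" where
  "lower_gt F0 F1 a b = (SUP x\<in>{a<..<b}. pos_part (b - x - 1 + left_lim F1 (gen_inv F0 x)))"

definition upper_gt :: "(real \<Rightarrow> real) \<Rightarrow> (real \<Rightarrow> real) \<Rightarrow> real \<Rightarrow> real \<Rightarrow> real" where
  "upper_gt F0 F1 a b = b - a - (SUP x\<in>{a<..<b}. pos_part (x - a - left_lim F1 (gen_inv F0 x)))"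

definition mono_lipschitz_bound :: "(real \<Rightarrow> real \<Rightarrow> real) \<Rightarrow> bool" where
  "mono_lipschitz_bound B \<longleftrightarrow>
     (\<forall>a a' b. 0 \<le> a \<and> a \<le> a' \<and> a' < b \<and> b \<le> 1 \<longrightarrow> B a' b \<le> B a b) \<and>
     (\<forall>a b b'. 0 \<le> a \<and> a < b \<and> b \<le> b' \<and> b' \<le> 1 \<longrightarrow> B a b \<le> B a b') \<and>
     (\<exists>C. \<forall>a a' b. 0 \<le> a \<and> 0 \<le> a' \<and> a < b \<and> a' < b \<and> b \<le> 1 \<longrightarrow>
            \<bar>B a b - B a' b\<bar> \<le> C * \<bar>a - a'\<bar>) \<and>
     (\<exists>C. \<forall>a b b'. 0 \<le> a \<and> a < b \<and> a < b' \<and> b \<le> 1 \<and> b' \<le> 1 \<longrightarrow>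
            \<bar>B a b - B a b'\<bar> \<le> C * \<bar>b - b'\<bar>)"

definition joint_with_marginals :: "(real \<times> real) measure \<Rightarrow> real measure \<Rightarrow> bool" where
  "joint_with_marginals N P1 \<longleftrightarrow>
     prob_space N \<and> sets N = sets borel \<and>
     distr N lborel fst = uniform_measure lborel {0..1} \<and>
     distr N borel snd = P1"

end

theory Submission
  imports Defs
begin


abbreviation U01 :: "real measure" where "U01 \<equiv> uniform_measure lborel {0..1::real}"

lemma U01_prob: "prob_space U01"
  by (rule prob_space_uniform_measure) auto

lemma sets_U01[simp]: "sets U01 = sets borel" by simp
lemma space_U01[simp]: "space U01 = UNIV" by simp

lemma measure_U01: "A \<in> sets borel \<Longrightarrow> measure U01 A = measure lborel ({0..1} \<inter> A)"
  by (subst measure_uniform_measure) auto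

lemma measure_U01_Ioo: "0 \<le> c \<Longrightarrow> c \<le> d \<Longrightarrow> d \<le> 1 \<Longrightarrow> measure U01 {c<..<d} = d - c"
proof -
  assume h: "0 \<le> c" "c \<le> d" "d \<le> 1"
  then have "{0..1} \<inter> {c<..<d} = {c<..<d}" by auto
  then show ?thesis using h by (simp add: measure_U01)
qed

lemma measure_U_Ioo:
  assumes M: "prob_space M" and U: "U \<in> borel_measurable M" and dU: "distr M lborel U = U01"
    and h: "0 \<le> c" "c \<le> d" "d \<le> 1"
  shows "measure M {\<omega>\<in>space M. c < U \<omega> \<and> U \<omega> < d} = d - c"
proof -
  have U': "U \<in> measurable M lborel" using U by simp
  have "measure M {\<omega>\<in>space M. c < U \<omega> \<and> U \<omega> < d} = measure (distr M lborel U) {c<..<d}"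
    by (subst measure_distr[OF U']) (auto intro!: arg_cong[where f="measure M"])
  also have "\<dots> = d - c" using dU measure_U01_Ioo[OF h] by simp
  finally show ?thesis .
qed

lemma cdf_Y:
  assumes Y: "Y \<in> borel_measurable M"
  shows "cdf (distr M borel Y) y = measure M {\<omega>\<in>space M. Y \<omega> \<le> y}"
  unfolding cdf_def
  by (subst measure_distr[OF Y]) (auto intro!: arg_cong[where f="measure M"])

lemma cdfm_Y:
  fixes Y :: "'a \<Rightarrow> real" assumes Y: "Y \<in> borel_measurable M"
  shows "measure (distr M borel Y) {..<y} = measure M {\<omega>\<in>space M. Y \<omega> < y}"
  by (subst measure_distr[OF Y]) (auto intro!: arg_cong[where f="measure M"])

lemma left_lim_cdf:
  assumes "real_distribution D"
  shows "left_lim (cdf D) y = measure D {..<y}"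
  unfolding left_lim_def
  by (rule tendsto_Lim) (auto intro: finite_borel_measure.cdf_at_left
     real_distribution.finite_borel_measure_M[OF assms])



lemma meas_le_sum:
  assumes "prob_space M" "B \<in> sets M" "A \<in> sets M" "C \<in> sets M" "B \<subseteq> A \<union> C"
  shows "measure M B \<le> measure M A + measure M C"
proof -
  interpret prob_space M by fact
  have "measure M B \<le> measure M (A \<union> C)" using assms by (intro finite_measure_mono) auto
  also have "\<dots> \<le> measure M A + measure M C" using assms by (intro measure_subadditive) auto
  finally show ?thesis .
qed

lemma ineq_core:
  fixes q :: "real \<Rightarrow> real" and U Y1 :: "'s \<Rightarrow> real"
  assumes M: "prob_space M" and U[measurable]: "U \<in> borel_measurable M"
    and Y[measurable]: "Y1 \<in> borel_measurable M"
    and dU: "distr M lborel U = U01" and qm[measurable]: "q \<in> borel_measurable borel"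
    and q: "\<And>u x. 0 < u \<Longrightarrow> u \<le> x \<Longrightarrow> x < 1 \<Longrightarrow> q u \<le> q x"
    and ab: "0 \<le> a" "a < x" "x < b" "b \<le> 1"
  shows "x - a - cdf (distr M borel Y1) (q x) \<le> measure M {\<omega>\<in>space M. a < U \<omega> \<and> U \<omega> < b \<and> q (U \<omega>) < Y1 \<omega>}"
   and "b - x - 1 + cdf (distr M borel Y1) (q x) \<le> measure M {\<omega>\<in>space M. a < U \<omega> \<and> U \<omega> < b \<and> Y1 \<omega> \<le> q (U \<omega>)}"
   and "b - x - 1 + measure (distr M borel Y1) {..<q x} \<le> measure M {\<omega>\<in>space M. a < U \<omega> \<and> U \<omega> < b \<and> q (U \<omega>) > Y1 \<omega>}"
   and "x - a - measure (distr M borel Y1) {..<q x} \<le> measure M {\<omega>\<in>space M. a < U \<omega> \<and> U \<omega> < b \<and> Y1 \<omega> \<ge> q (U \<omega>)}"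
proof -
  interpret prob_space M by fact
  have m1: "measure M {\<omega>\<in>space M. a < U \<omega> \<and> U \<omega> < x} = x - a"
    using measure_U_Ioo[OF M U dU, of a x] ab by simp
  have m2: "measure M {\<omega>\<in>space M. x < U \<omega> \<and> U \<omega> < b} = b - x"
    using measure_U_Ioo[OF M U dU, of x b] ab by simp
  have F: "cdf (distr M borel Y1) (q x) = measure M {\<omega>\<in>space M. Y1 \<omega> \<le> q x}"
    by (rule cdf_Y[OF Y])
  have Fm: "measure (distr M borel Y1) {..<q x} = measure M {\<omega>\<in>space M. Y1 \<omega> < q x}"
    by (rule cdfm_Y[OF Y])
  have c1: "measure M {\<omega>\<in>space M. Y1 \<omega> \<le> q x} = 1 - measure M {\<omega>\<in>space M. q x < Y1 \<omega>}"
  proof -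
    have "{\<omega>\<in>space M. Y1 \<omega> \<le> q x} = space M - {\<omega>\<in>space M. q x < Y1 \<omega>}" by auto
    then show ?thesis by (simp add: prob_compl)
  qed
  have c2: "measure M {\<omega>\<in>space M. Y1 \<omega> < q x} = 1 - measure M {\<omega>\<in>space M. q x \<le> Y1 \<omega>}"
  proof -
    have "{\<omega>\<in>space M. Y1 \<omega> < q x} = space M - {\<omega>\<in>space M. q x \<le> Y1 \<omega>}" by auto
    then show ?thesis by (simp add: prob_compl)
  qed
  show "x - a - cdf (distr M borel Y1) (q x) \<le> measure M {\<omega>\<in>space M. a < U \<omega> \<and> U \<omega> < b \<and> q (U \<omega>) < Y1 \<omega>}"
  proof -
    have "measure M {\<omega>\<in>space M. a < U \<omega> \<and> U \<omega> < x} \<le>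
      measure M {\<omega>\<in>space M. a < U \<omega> \<and> U \<omega> < b \<and> q (U \<omega>) < Y1 \<omega>} + measure M {\<omega>\<in>space M. Y1 \<omega> \<le> q x}"
      apply (rule meas_le_sum[OF M]) subgoal by measurable subgoal by measurable subgoal by measurable
      using ab q[of _ x] by (auto, smt (verit))
    then show ?thesis using m1 F by simp
  qed
  show "b - x - 1 + cdf (distr M borel Y1) (q x) \<le> measure M {\<omega>\<in>space M. a < U \<omega> \<and> U \<omega> < b \<and> Y1 \<omega> \<le> q (U \<omega>)}"
  proof -
    have "measure M {\<omega>\<in>space M. x < U \<omega> \<and> U \<omega> < b} \<le>
      measure M {\<omega>\<in>space M. a < U \<omega> \<and> U \<omega> < b \<and> Y1 \<omega> \<le> q (U \<omega>)} + measure M {\<omega>\<in>space M. q x < Y1 \<omega>}"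
      apply (rule meas_le_sum[OF M]) subgoal by measurable subgoal by measurable subgoal by measurable
      using ab q[of x] by (auto, smt (verit))
    then show ?thesis using m2 F c1 by simp
  qed
  show "b - x - 1 + measure (distr M borel Y1) {..<q x} \<le> measure M {\<omega>\<in>space M. a < U \<omega> \<and> U \<omega> < b \<and> q (U \<omega>) > Y1 \<omega>}"
  proof -
    have "measure M {\<omega>\<in>space M. x < U \<omega> \<and> U \<omega> < b} \<le>
      measure M {\<omega>\<in>space M. a < U \<omega> \<and> U \<omega> < b \<and> q (U \<omega>) > Y1 \<omega>} + measure M {\<omega>\<in>space M. q x \<le> Y1 \<omega>}"
      apply (rule meas_le_sum[OF M]) subgoal by measurable subgoal by measurable subgoal by measurable
      using ab q[of x] by (auto, smt (verit))
    then show ?thesis using m2 Fm c2 by simp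
  qed
  show "x - a - measure (distr M borel Y1) {..<q x} \<le> measure M {\<omega>\<in>space M. a < U \<omega> \<and> U \<omega> < b \<and> Y1 \<omega> \<ge> q (U \<omega>)}"
  proof -
    have "measure M {\<omega>\<in>space M. a < U \<omega> \<and> U \<omega> < x} \<le>
      measure M {\<omega>\<in>space M. a < U \<omega> \<and> U \<omega> < b \<and> Y1 \<omega> \<ge> q (U \<omega>)} + measure M {\<omega>\<in>space M. Y1 \<omega> < q x}"
      apply (rule meas_le_sum[OF M]) subgoal by measurable subgoal by measurable subgoal by measurable
      using ab q[of _ x] by (auto, smt (verit))
    then show ?thesis using m1 Fm by simp
  qed
qed



definition L1 :: "(real \<Rightarrow> real) \<Rightarrow> real \<Rightarrow> real \<Rightarrow> real" where
  "L1 G a b = (SUP x\<in>{a<..<b}. pos_part (x - a - G x))"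
definition L2 :: "(real \<Rightarrow> real) \<Rightarrow> real \<Rightarrow> real \<Rightarrow> real" where
  "L2 G a b = (SUP x\<in>{a<..<b}. pos_part (b - x - 1 + G x))"

definition Gok :: "(real \<Rightarrow> real) \<Rightarrow> bool" where
  "Gok G \<longleftrightarrow> (\<forall>x y. 0 < x \<longrightarrow> x \<le> y \<longrightarrow> y < 1 \<longrightarrow> G x \<le> G y) \<and> (\<forall>x. 0 \<le> G x \<and> G x \<le> 1)"

definition good_bound :: "(real \<Rightarrow> real \<Rightarrow> real) \<Rightarrow> bool" where
  "good_bound B \<longleftrightarrow>
     (\<forall>a a' b. 0 \<le> a \<and> a \<le> a' \<and> a' < b \<and> b \<le> 1 \<longrightarrow> B a' b \<le> B a b \<and> B a b \<le> B a' b + (a' - a)) \<and>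
     (\<forall>a b b'. 0 \<le> a \<and> a < b \<and> b \<le> b' \<and> b' \<le> 1 \<longrightarrow> B a b \<le> B a b' \<and> B a b' \<le> B a b + (b' - b))"

lemma pos_part_le: "t \<le> c \<Longrightarrow> 0 \<le> c \<Longrightarrow> pos_part t \<le> c"
  by (simp add: pos_part_def)
lemma pos_part_ge: "t \<le> pos_part t" "0 \<le> pos_part t"
  by (simp_all add: pos_part_def)
lemma pos_part_mono: "t \<le> s \<Longrightarrow> pos_part t \<le> pos_part s"
  by (simp add: pos_part_def)

lemma SUP_pp_bdd:
  assumes "\<And>x. x \<in> S \<Longrightarrow> f x \<le> c"
  shows "bdd_above ((\<lambda>x. pos_part (f x)) ` S)"
  by (rule bdd_aboveI[of _ "max c 0"]) (use assms in \<open>force simp: pos_part_def\<close>)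

lemma L1_upper: "Gok G \<Longrightarrow> x \<in> {a<..<b} \<Longrightarrow> pos_part (x - a - G x) \<le> L1 G a b"
  unfolding L1_def
  by (rule cSUP_upper) (auto intro!: SUP_pp_bdd[where c="b - a"] simp: Gok_def, smt (verit))

lemma L2_upper: "Gok G \<Longrightarrow> x \<in> {a<..<b} \<Longrightarrow> pos_part (b - x - 1 + G x) \<le> L2 G a b"
  unfolding L2_def
  by (rule cSUP_upper) (auto intro!: SUP_pp_bdd[where c="b - a"] simp: Gok_def, smt (verit))

lemma L1_least: "a < b \<Longrightarrow> 0 \<le> c \<Longrightarrow> (\<And>x. a < x \<Longrightarrow> x < b \<Longrightarrow> x - a - G x \<le> c) \<Longrightarrow> L1 G a b \<le> c"
  unfolding L1_def by (rule cSUP_least) (auto intro: pos_part_le)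

lemma L2_least: "a < b \<Longrightarrow> 0 \<le> c \<Longrightarrow> (\<And>x. a < x \<Longrightarrow> x < b \<Longrightarrow> b - x - 1 + G x \<le> c) \<Longrightarrow> L2 G a b \<le> c"
  unfolding L2_def by (rule cSUP_least) (auto intro: pos_part_le)

lemma L1_nonneg: "Gok G \<Longrightarrow> a < b \<Longrightarrow> 0 \<le> L1 G a b"
  using L1_upper[of G "(a+b)/2" a b] pos_part_ge(2)[of "(a+b)/2 - a - G ((a+b)/2)"] by auto

lemma L2_nonneg: "Gok G \<Longrightarrow> a < b \<Longrightarrow> 0 \<le> L2 G a b"
  using L2_upper[of G "(a+b)/2" a b] pos_part_ge(2)[of "b - (a+b)/2 - 1 + G ((a+b)/2)"] by auto

lemma L1_le: "Gok G \<Longrightarrow> a < b \<Longrightarrow> L1 G a b \<le> b - a"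
  by (rule L1_least) (auto simp: Gok_def, smt (verit))

lemma L2_le: "Gok G \<Longrightarrow> a < b \<Longrightarrow> L2 G a b \<le> b - a"
  by (rule L2_least) (auto simp: Gok_def, smt (verit))

lemma L1_up: "Gok G \<Longrightarrow> a < x \<Longrightarrow> x < b \<Longrightarrow> x - a - G x \<le> L1 G a b"
  using L1_upper[of G x a b] pos_part_ge(1)[of "x - a - G x"] by auto

lemma L2_up: "Gok G \<Longrightarrow> a < x \<Longrightarrow> x < b \<Longrightarrow> b - x - 1 + G x \<le> L2 G a b"
  using L2_upper[of G x a b] pos_part_ge(1)[of "b - x - 1 + G x"] by auto

lemma good_L1: assumes G: "Gok G" shows "good_bound (L1 G)"
  unfolding good_bound_def
proof (intro conjI allI impI)
  fix a a' b :: real assume h: "0 \<le> a \<and> a \<le> a' \<and> a' < b \<and> b \<le> 1"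
  show "L1 G a' b \<le> L1 G a b"
  proof (rule L1_least)
    fix x assume "a' < x" "x < b"
    then show "x - a' - G x \<le> L1 G a b" using L1_up[OF G, of a x b] h by simp
  qed (use h L1_nonneg[OF G, of a b] in auto)
  show "L1 G a b \<le> L1 G a' b + (a' - a)"
  proof (rule L1_least)
    fix x assume x: "a < x" "x < b"
    show "x - a - G x \<le> L1 G a' b + (a' - a)"
    proof (cases "a' < x")
      case True then show ?thesis using L1_up[OF G True x(2)] by simp
    next
      case False then show ?thesis using L1_nonneg[OF G, of a' b] h G by (auto simp: Gok_def, smt (verit))
    qed
  qed (use h L1_nonneg[OF G, of a' b] in auto)
next
  fix a b b' :: real assume h: "0 \<le> a \<and> a < b \<and> b \<le> b' \<and> b' \<le> 1"
  show "L1 G a b \<le> L1 G a b'"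
  proof (rule L1_least)
    fix x assume "a < x" "x < b"
    then show "x - a - G x \<le> L1 G a b'" using L1_up[OF G, of a x b'] h by simp
  qed (use h L1_nonneg[OF G, of a b'] in auto)
  show "L1 G a b' \<le> L1 G a b + (b' - b)"
  proof (rule L1_least)
    fix x assume x: "a < x" "x < b'"
    show "x - a - G x \<le> L1 G a b + (b' - b)"
    proof (cases "x < b")
      case True then show ?thesis using L1_up[OF G x(1) True] h by simp
    next
      case False
      show ?thesis
      proof (rule field_le_epsilon)
        fix e :: real assume e: "0 < e"
        define z where "z = max ((a+b)/2) (b - e)"
        have z: "a < z" "z < b" "z \<le> x" using h e False by (auto simp: z_def less_max_iff_disj)
        have "G z \<le> G x" using G z h x unfolding Gok_def by auto
        moreover have "z - a - G z \<le> L1 G a b" by (rule L1_up[OF G z(1,2)])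
        moreover have "x - z \<le> (b' - b) + e" using x h by (auto simp: z_def)
        ultimately show "x - a - G x \<le> L1 G a b + (b' - b) + e" by linarith
      qed
    qed
  qed (use h L1_nonneg[OF G, of a b] in auto)
qed

lemma good_L2: assumes G: "Gok G" shows "good_bound (L2 G)"
  unfolding good_bound_def
proof (intro conjI allI impI)
  fix a a' b :: real assume h: "0 \<le> a \<and> a \<le> a' \<and> a' < b \<and> b \<le> 1"
  show "L2 G a' b \<le> L2 G a b"
  proof (rule L2_least)
    fix x assume "a' < x" "x < b"
    then show "b - x - 1 + G x \<le> L2 G a b" using L2_up[OF G, of a x b] h by simp
  qed (use h L2_nonneg[OF G, of a b] in auto)
  show "L2 G a b \<le> L2 G a' b + (a' - a)"
  proof (rule L2_least)
    fix x assume x: "a < x" "x < b"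
    show "b - x - 1 + G x \<le> L2 G a' b + (a' - a)"
    proof (cases "a' < x")
      case True then show ?thesis using L2_up[OF G True x(2)] h by simp
    next
      case False
      show ?thesis
      proof (rule field_le_epsilon)
        fix e :: real assume e: "0 < e"
        define z where "z = min ((a'+b)/2) (a' + e)"
        have z: "a' < z" "z < b" "x \<le> z" using h e False by (auto simp: z_def min_less_iff_disj)
        have "G x \<le> G z" using G z h x unfolding Gok_def by auto
        moreover have "b - z - 1 + G z \<le> L2 G a' b" by (rule L2_up[OF G z(1,2)])
        moreover have "z - x \<le> (a' - a) + e" using x h by (auto simp: z_def)
        ultimately show "b - x - 1 + G x \<le> L2 G a' b + (a' - a) + e" by linarith
      qed
    qed
  qed (use h L2_nonneg[OF G, of a' b] in auto)
next
  fix a b b' :: real assume h: "0 \<le> a \<and> a < b \<and> b \<le> b' \<and> b' \<le> 1"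
  show "L2 G a b \<le> L2 G a b'"
  proof (rule L2_least)
    fix x assume "a < x" "x < b"
    then show "b - x - 1 + G x \<le> L2 G a b'" using L2_up[OF G, of a x b'] h by simp
  qed (use h L2_nonneg[OF G, of a b'] in auto)
  show "L2 G a b' \<le> L2 G a b + (b' - b)"
  proof (rule L2_least)
    fix x assume x: "a < x" "x < b'"
    show "b' - x - 1 + G x \<le> L2 G a b + (b' - b)"
    proof (cases "x < b")
      case True then show ?thesis using L2_up[OF G x(1) True] by simp
    next
      case False then show ?thesis using L2_nonneg[OF G, of a b] h G by (auto simp: Gok_def, smt (verit))
    qed
  qed (use h L2_nonneg[OF G, of a b] in auto)
qed

lemma good_compl: "good_bound B \<Longrightarrow> good_bound (\<lambda>a b. b - a - B a b)"
  unfolding good_bound_def by (smt (verit, best))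

lemma good_mono_lip: assumes "good_bound B" shows "mono_lipschitz_bound B"
  unfolding mono_lipschitz_bound_def
proof (intro conjI)
  show "\<exists>C. \<forall>a a' b. 0 \<le> a \<and> 0 \<le> a' \<and> a < b \<and> a' < b \<and> b \<le> 1 \<longrightarrow> \<bar>B a b - B a' b\<bar> \<le> C * \<bar>a - a'\<bar>"
  proof (intro exI[of _ 1] allI impI)
    fix a a' b :: real assume h: "0 \<le> a \<and> 0 \<le> a' \<and> a < b \<and> a' < b \<and> b \<le> 1"
    show "\<bar>B a b - B a' b\<bar> \<le> 1 * \<bar>a - a'\<bar>"
    proof (cases "a \<le> a'")
      case True then show ?thesis using assms h unfolding good_bound_def
        by (smt (verit, best))
    next
      case False then show ?thesis using assms h unfolding good_bound_def
        by (smt (verit, best))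
    qed
  qed
  show "\<exists>C. \<forall>a b b'. 0 \<le> a \<and> a < b \<and> a < b' \<and> b \<le> 1 \<and> b' \<le> 1 \<longrightarrow> \<bar>B a b - B a b'\<bar> \<le> C * \<bar>b - b'\<bar>"
  proof (intro exI[of _ 1] allI impI)
    fix a b b' :: real assume h: "0 \<le> a \<and> a < b \<and> a < b' \<and> b \<le> 1 \<and> b' \<le> 1"
    show "\<bar>B a b - B a b'\<bar> \<le> 1 * \<bar>b - b'\<bar>"
    proof (cases "b \<le> b'")
      case True then show ?thesis using assms h unfolding good_bound_def
        by (smt (verit, best))
    next
      case False then show ?thesis using assms h unfolding good_bound_def
        by (smt (verit, best))
    qed
  qed
qed (use assms in \<open>auto simp: good_bound_def\<close>)



context
  fixes D :: "real measure"
  assumes D: "real_distribution D"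
begin

interpretation real_distribution D by (rule D)

lemma cdf_mono': "x \<le> y \<Longrightarrow> cdf D x \<le> cdf D y"
  by (rule cdf_nondecreasing)

lemma cdf_low: "0 < v \<Longrightarrow> \<exists>y0. \<forall>y\<le>y0. cdf D y < v"
proof -
  assume v: "0 < v"
  have "eventually (\<lambda>y. cdf D y < v) at_bot"
    using order_tendstoD(2)[OF cdf_lim_at_bot v] .
  then show ?thesis by (auto simp: eventually_at_bot_linorder)
qed

lemma cdf_high: "v < 1 \<Longrightarrow> \<exists>y0. \<forall>y\<ge>y0. v < cdf D y"
proof -
  assume v: "v < 1"
  have "eventually (\<lambda>y. v < cdf D y) at_top"
    using order_tendstoD(1)[OF cdf_lim_at_top_prob v] .
  then show ?thesis by (auto simp: eventually_at_top_linorder)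
qed

lemma bdd_below_ge: "0 < v \<Longrightarrow> bdd_below {y. v \<le> cdf D y}"
proof -
  assume "0 < v"
  then obtain y0 where y0: "\<forall>y\<le>y0. cdf D y < v" using cdf_low by blast
  show ?thesis
  proof (rule bdd_belowI[of _ y0])
    fix y assume "y \<in> {y. v \<le> cdf D y}"
    then show "y0 \<le> y" using y0 by (meson linorder_not_le mem_Collect_eq order_less_imp_le)
  qed
qed

lemma bdd_below_gt: "0 < v \<Longrightarrow> bdd_below {y. v < cdf D y}"
  by (rule bdd_below_mono[OF bdd_below_ge]) auto

lemma ne_gt: "v < 1 \<Longrightarrow> {y. v < cdf D y} \<noteq> {}"
proof -
  assume "v < 1"
  then obtain y0 where "\<forall>y\<ge>y0. v < cdf D y" using cdf_high by blast
  then have "y0 \<in> {y. v < cdf D y}" by auto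
  then show ?thesis by blast
qed

lemma ne_ge: "v < 1 \<Longrightarrow> {y. v \<le> cdf D y} \<noteq> {}"
proof -
  assume "v < 1"
  then obtain y where "v < cdf D y" using ne_gt by blast
  then have "y \<in> {y. v \<le> cdf D y}" by auto
  then show ?thesis by blast
qed

lemma gen_inv_le: "0 < v \<Longrightarrow> v \<le> cdf D y \<Longrightarrow> gen_inv (cdf D) v \<le> y"
  unfolding gen_inv_def by (rule cInf_lower) (auto intro: bdd_below_ge)

lemma gen_inv_le_rev: assumes v: "0 < v" "v < 1" and le: "gen_inv (cdf D) v \<le> y" shows "v \<le> cdf D y"
proof -
  let ?q = "gen_inv (cdf D) v"
  have "v \<le> cdf D ?q"
  proof (rule tendsto_lowerbound[OF cdf_is_right_cont[unfolded continuous_within]])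
    show "\<forall>\<^sub>F z in at_right ?q. v \<le> cdf D z"
    proof (rule eventually_at_rightI[where b="?q + 1"])
      fix z assume z: "z \<in> {?q<..<?q+1}"
      then have "Inf {y. v \<le> cdf D y} < z" by (simp add: gen_inv_def)
      then obtain s where s: "s \<in> {y. v \<le> cdf D y}" "s < z"
        using cInf_lessD[OF ne_ge[OF v(2)]] by blast
      then show "v \<le> cdf D z" using cdf_mono'[of s z] by auto
    qed simp
  qed simp
  also have "\<dots> \<le> cdf D y" by (rule cdf_mono'[OF le])
  finally show ?thesis .
qed

definition Qp :: "real \<Rightarrow> real" where "Qp v = Inf {y. v < cdf D y}"

lemma Qp_le: "0 < v \<Longrightarrow> v < cdf D y \<Longrightarrow> Qp v \<le> y"
  unfolding Qp_def by (rule cInf_lower) (auto intro: bdd_below_gt)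

lemma Qp_le_rev: assumes v: "0 < v" "v < 1" and le: "Qp v \<le> y" shows "v \<le> cdf D y"
proof (rule ccontr)
  assume "\<not> v \<le> cdf D y"
  then have lt: "cdf D y < v" by simp
  have "\<forall>\<^sub>F z in at_right y. cdf D z < v"
    using order_tendstoD(2)[OF cdf_is_right_cont[unfolded continuous_within] lt] .
  moreover have "\<forall>\<^sub>F z in at_right y. y < z" by (rule eventually_at_right_less)
  ultimately have "\<forall>\<^sub>F z in at_right y. cdf D z < v \<and> y < z" by (rule eventually_conj)
  then obtain z where z: "cdf D z < v" "y < z"
    using eventually_happens'[of "at_right y"] by force
  have "z \<le> Qp v" unfolding Qp_def
  proof (rule cInf_greatest[OF ne_gt[OF v(2)]])
    fix t assume "t \<in> {y. v < cdf D y}"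
    then have "cdf D z < cdf D t" using z by auto
    then show "z \<le> t" using cdf_mono'[of t z] by fastforce
  qed
  then show False using le z by simp
qed

lemma Qp_ge: assumes v: "v < 1" and h: "\<And>z. z < y \<Longrightarrow> cdf D z \<le> v" shows "y \<le> Qp v"
  unfolding Qp_def
proof (rule cInf_greatest[OF ne_gt[OF v]])
  fix t assume "t \<in> {y. v < cdf D y}"
  then show "y \<le> t" using h by (meson linorder_not_le mem_Collect_eq not_le)
qed

lemma Qp_lt: assumes v: "0 < v" and h: "v < measure D {..<y}" shows "Qp v < y"
proof -
  have "\<forall>\<^sub>F z in at_left y. v < cdf D z"
    using order_tendstoD(1)[OF cdf_at_left h] .
  moreover have "\<forall>\<^sub>F z in at_left y. z < y" using eventually_at_left_real[of "y - 1" y] by (auto elim: eventually_mono)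
  ultimately have "\<forall>\<^sub>F z in at_left y. v < cdf D z \<and> z < y" by (rule eventually_conj)
  then obtain z where z: "v < cdf D z" "z < y"
    using eventually_happens'[of "at_left y"] by force
  then show ?thesis using Qp_le[OF v z(1)] by simp
qed

lemma cdfm_mono: "z < y \<Longrightarrow> cdf D z \<le> measure D {..<y}"
  unfolding cdf_def by (rule finite_measure_mono) auto

lemma gen_inv_mono: "0 < u \<Longrightarrow> u \<le> x \<Longrightarrow> x < 1 \<Longrightarrow> gen_inv (cdf D) u \<le> gen_inv (cdf D) x"
  unfolding gen_inv_def by (rule cInf_superset_mono[OF ne_ge bdd_below_ge]) auto

lemma Qp_mono: "0 < u \<Longrightarrow> u \<le> x \<Longrightarrow> x < 1 \<Longrightarrow> Qp u \<le> Qp x"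
  unfolding Qp_def by (rule cInf_superset_mono[OF ne_gt bdd_below_gt]) auto

end

definition clean :: "(real \<Rightarrow> real) \<Rightarrow> real \<Rightarrow> real" where
  "clean Q v = (if v \<in> {0<..<1} then Q v else 0)"

lemma clean_measurable:
  assumes "\<And>u x. 0 < u \<Longrightarrow> u \<le> x \<Longrightarrow> x < 1 \<Longrightarrow> Q u \<le> Q x"
  shows "clean Q \<in> borel_measurable borel"
proof -
  have "mono_on {0<..<1} Q" using assms by (auto simp: mono_on_def)
  then have "Q \<in> borel_measurable (restrict_space borel {0<..<1})" by (rule borel_measurable_mono_on_fnc)
  then show ?thesis unfolding clean_def
    by (subst (asm) measurable_restrict_space_iff) auto
qed

lemma clean_mono: "(\<And>u x. 0 < u \<Longrightarrow> u \<le> x \<Longrightarrow> x < 1 \<Longrightarrow> Q u \<le> Q x) \<Longrightarrow>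
   0 < u \<Longrightarrow> u \<le> x \<Longrightarrow> x < 1 \<Longrightarrow> clean Q u \<le> clean Q x"
  by (auto simp: clean_def)

lemma clean_eq: "0 < v \<Longrightarrow> v < 1 \<Longrightarrow> clean Q v = Q v"
  by (simp add: clean_def)

lemma measure_U01_Ioc: "0 \<le> c \<Longrightarrow> c \<le> 1 \<Longrightarrow> measure U01 {0<..c} = c"
proof -
  assume h: "0 \<le> c" "c \<le> 1"
  then have "{0..1} \<inter> {0<..c} = {0<..c}" by auto
  then show ?thesis using h by (simp add: measure_U01)
qed

lemma quantile_distr:
  fixes Q :: "real \<Rightarrow> real"
  assumes D: "real_distribution D" and Qm: "Q \<in> borel_measurable borel"
   and Q1: "\<And>v y. 0 < v \<Longrightarrow> v < 1 \<Longrightarrow> v < cdf D y \<Longrightarrow> Q v \<le> y"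
   and Q2: "\<And>v y. 0 < v \<Longrightarrow> v < 1 \<Longrightarrow> Q v \<le> y \<Longrightarrow> v \<le> cdf D y"
  shows "distr U01 borel Q = D"
proof (rule cdf_unique)
  interpret P: prob_space U01 by (rule U01_prob)
  interpret R: real_distribution D by (rule D)
  show "real_distribution (distr U01 borel Q)" using Qm by simp
  show "real_distribution D" by (rule D)
  show "cdf (distr U01 borel Q) = cdf D"
  proof
    fix y
    let ?c = "cdf D y"
    have c: "0 \<le> ?c" "?c \<le> 1" by (auto intro: R.cdf_nonneg R.cdf_bounded_prob)
    have e: "cdf (distr U01 borel Q) y = measure U01 {v. Q v \<le> y}"
    proof -
      have Qm': "Q \<in> borel_measurable U01" using Qm by (simp add: measurable_cong_sets[OF sets_U01 refl])
      show ?thesis using cdf_Y[OF Qm', of y] by simp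
    qed
    have "measure U01 {0<..<?c} \<le> measure U01 {v. Q v \<le> y}"
      by (rule P.finite_measure_mono) (use Q1 c Qm in \<open>auto, measurable\<close>)
    then have lo: "?c \<le> measure U01 {v. Q v \<le> y}" using measure_U01_Ioo[of 0 ?c] c by simp
    have "measure U01 {v. Q v \<le> y} \<le> measure U01 ({0<..?c} \<union> - {0<..<1})"
      by (rule P.finite_measure_mono) (use Q2 c Qm in \<open>auto, measurable\<close>)
    also have "\<dots> \<le> measure U01 {0<..?c} + measure U01 (- {0<..<1})"
      by (rule measure_subadditive) (auto simp: P.emeasure_eq_measure)
    also have "measure U01 (- {0<..<1}) = 0"
    proof -
      have "measure U01 (- {0<..<1}) = measure U01 (space U01 - {0<..<1})" by (simp add: Compl_eq_Diff_UNIV)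
      also have "\<dots> = 1 - measure U01 {0<..<1}" by (rule P.prob_compl) simp
      finally show ?thesis using measure_U01_Ioo[of 0 1] by simp
    qed
    finally have hi: "measure U01 {v. Q v \<le> y} \<le> ?c" using measure_U01_Ioc c by simp
    show "cdf (distr U01 borel Q) y = cdf D y" using lo hi e by simp
  qed
qed



definition swp :: "real \<Rightarrow> real \<Rightarrow> real \<Rightarrow> real \<Rightarrow> real" where
  "swp p q r u = (if p \<le> u \<and> u < q then u + (r - q) else if q \<le> u \<and> u < r then u - (q - p) else u)"

lemma swp_measurable[measurable]: "swp p q r \<in> borel_measurable borel"
  unfolding swp_def by measurable

lemma lborel_transl: "B \<in> sets borel \<Longrightarrow> emeasure lborel ((\<lambda>u::real. u + c) -` B) = emeasure lborel B"
proof -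
  assume B: "B \<in> sets borel"
  have "emeasure lborel B = emeasure (distr lborel borel ((+) c)) B" by (simp add: lborel_distr_plus)
  also have "\<dots> = emeasure lborel ((+) c -` B)" using B by (subst emeasure_distr) auto
  also have "(+) c -` B = (\<lambda>u. u + c) -` B" by (auto simp: add.commute)
  finally show ?thesis by simp
qed

lemma split3:
  assumes X: "X \<in> sets borel" and h: "0 \<le> p" "p \<le> m" "m \<le> r" "r \<le> 1"
  shows "emeasure lborel (X \<inter> {0..1::real}) = emeasure lborel (X \<inter> ({0..1} - {p..<r})) +
     emeasure lborel (X \<inter> {p..<m}) + emeasure lborel (X \<inter> {m..<r})"
proof -
  have "X \<inter> {0..1} = ((X \<inter> ({0..1} - {p..<r})) \<union> (X \<inter> {p..<m})) \<union> (X \<inter> {m..<r})"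
    using h by auto
  then have "emeasure lborel (X \<inter> {0..1}) = emeasure lborel (((X \<inter> ({0..1} - {p..<r})) \<union> (X \<inter> {p..<m})) \<union> (X \<inter> {m..<r}))"
    by simp
  also have "\<dots> = emeasure lborel ((X \<inter> ({0..1} - {p..<r})) \<union> (X \<inter> {p..<m})) + emeasure lborel (X \<inter> {m..<r})"
    using X h by (intro plus_emeasure[symmetric]) auto
  also have "emeasure lborel ((X \<inter> ({0..1} - {p..<r})) \<union> (X \<inter> {p..<m})) =
       emeasure lborel (X \<inter> ({0..1} - {p..<r})) + emeasure lborel (X \<inter> {p..<m})"
    using X h by (intro plus_emeasure[symmetric]) auto
  finally show ?thesis .
qed

lemma swp_pres:
  assumes h: "0 \<le> p" "p \<le> q" "q \<le> r" "r \<le> 1"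
  shows "distr U01 borel (swp p q r) = U01"
proof (rule measure_eqI)
  show "sets (distr U01 borel (swp p q r)) = sets U01" by simp
  fix A assume "A \<in> sets (distr U01 borel (swp p q r))"
  then have A: "A \<in> sets borel" by simp
  have pre: "swp p q r -` A \<in> sets borel"
    using measurable_sets[OF swp_measurable A] by simp
  have l: "emeasure (distr U01 borel (swp p q r)) A = emeasure lborel (swp p q r -` A \<inter> {0..1})"
    using A pre by (subst emeasure_distr) (auto simp: Int_commute divide_ennreal_def)
  have r: "emeasure U01 A = emeasure lborel (A \<inter> {0..1})" using A by (simp add: Int_commute divide_ennreal_def)
  let ?d = "r - q"
  have e1: "swp p q r -` A \<inter> ({0..1} - {p..<r}) = A \<inter> ({0..1} - {p..<r})"
    using h by (auto simp: swp_def)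
  have e2: "swp p q r -` A \<inter> {p..<q} = (\<lambda>u. u + ?d) -` (A \<inter> {p + ?d..<r})"
    by (auto simp: swp_def)
  have e3: "swp p q r -` A \<inter> {q..<r} = (\<lambda>u. u + (p - q)) -` (A \<inter> {p..<p + ?d})"
    using h by (auto simp: swp_def algebra_simps)
  have "emeasure lborel (swp p q r -` A \<inter> {0..1}) =
     emeasure lborel (A \<inter> ({0..1} - {p..<r})) + emeasure lborel (A \<inter> {p + ?d..<r}) + emeasure lborel (A \<inter> {p..<p + ?d})"
  proof -
    have t2: "emeasure lborel ((\<lambda>u. u + ?d) -` (A \<inter> {p + ?d..<r})) = emeasure lborel (A \<inter> {p + ?d..<r})"
      by (rule lborel_transl) (use A in auto)
    have t3: "emeasure lborel ((\<lambda>u. u + (p - q)) -` (A \<inter> {p..<p + ?d})) = emeasure lborel (A \<inter> {p..<p + ?d})"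
      by (rule lborel_transl) (use A in auto)
    show ?thesis using split3[OF pre h(1,2) h(3) h(4)] unfolding e1 e2 e3 t2 t3 .
  qed
  also have "\<dots> = emeasure lborel (A \<inter> {0..1})"
    using split3[OF A h(1), of "p + ?d" r] h by (simp add: add_ac)
  finally show "emeasure (distr U01 borel (swp p q r)) A = emeasure U01 A" using l r by simp
qed

lemma distr_comp_pres:
  assumes f[measurable]: "f \<in> borel_measurable borel" and g[measurable]: "g \<in> borel_measurable borel"
    and pf: "distr U01 borel f = U01" and pg: "distr U01 borel g = U01"
  shows "distr U01 borel (f \<circ> g) = U01"
proof -
  have "distr U01 borel (f \<circ> g) = distr (distr U01 borel g) borel f"
    by (subst distr_distr) auto
  also have "\<dots> = U01" using pf pg by simp
  finally show ?thesis .
qed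

definition sigA :: "real \<Rightarrow> real \<Rightarrow> real \<Rightarrow> real \<Rightarrow> real" where
  "sigA a b s = swp 0 a b \<circ> swp a (a + s) b"
definition sigB :: "real \<Rightarrow> real \<Rightarrow> real \<Rightarrow> real \<Rightarrow> real" where
  "sigB a b s = swp (1 - b + a) (1 - s) 1 \<circ> swp a b 1"

lemma sigA_measurable[measurable]: "sigA a b s \<in> borel_measurable borel"
  unfolding sigA_def by measurable
lemma sigB_measurable[measurable]: "sigB a b s \<in> borel_measurable borel"
  unfolding sigB_def by measurable

lemma sigA_pres: "0 \<le> a \<Longrightarrow> 0 \<le> s \<Longrightarrow> a + s \<le> b \<Longrightarrow> b \<le> 1 \<Longrightarrow> distr U01 borel (sigA a b s) = U01"
  unfolding sigA_def by (rule distr_comp_pres) (auto intro!: swp_pres)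

lemma sigB_pres: "0 \<le> a \<Longrightarrow> 0 \<le> s \<Longrightarrow> a + s \<le> b \<Longrightarrow> b \<le> 1 \<Longrightarrow> distr U01 borel (sigB a b s) = U01"
  unfolding sigB_def by (rule distr_comp_pres) (auto intro!: swp_pres)

lemma sigA_val: "0 \<le> s \<Longrightarrow> a + s < u \<Longrightarrow> u < b \<Longrightarrow> sigA a b s u = u - a - s"
  by (auto simp: sigA_def swp_def)

lemma sigB_val: "0 \<le> s \<Longrightarrow> a < u \<Longrightarrow> u < b - s \<Longrightarrow> b \<le> 1 \<Longrightarrow> sigB a b s u = u + 1 - b + s"
  by (auto simp: sigB_def swp_def)



lemma measure_split2:
  assumes "prob_space M" "{\<omega>\<in>space M. A \<omega>} \<in> sets M" "{\<omega>\<in>space M. B \<omega>} \<in> sets M"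
  shows "measure M {\<omega>\<in>space M. A \<omega> \<and> B \<omega>} + measure M {\<omega>\<in>space M. A \<omega> \<and> \<not> B \<omega>} = measure M {\<omega>\<in>space M. A \<omega>}"
proof -
  interpret prob_space M by fact
  have e: "{\<omega>\<in>space M. A \<omega>} = {\<omega>\<in>space M. A \<omega> \<and> B \<omega>} \<union> {\<omega>\<in>space M. A \<omega> \<and> \<not> B \<omega>}" by auto
  have s1: "{\<omega>\<in>space M. A \<omega> \<and> B \<omega>} \<in> sets M"
    using sets.Int[OF assms(2,3)] by (simp add: Collect_conj_eq[symmetric] Int_def conj_ac)
  have s2: "{\<omega>\<in>space M. A \<omega> \<and> \<not> B \<omega>} \<in> sets M"
  proof -
    have "{\<omega>\<in>space M. A \<omega> \<and> \<not> B \<omega>} = {\<omega>\<in>space M. A \<omega>} - {\<omega>\<in>space M. B \<omega>}" by auto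
    then show ?thesis using assms by auto
  qed
  have "{\<omega>\<in>space M. A \<omega> \<and> B \<omega>} \<inter> {\<omega>\<in>space M. A \<omega> \<and> \<not> B \<omega>} = {}" by auto
  from finite_measure_Union[OF s1 s2 this] show ?thesis by (simp only: e[symmetric])
qed

lemma ineq_all:
  fixes q :: "real \<Rightarrow> real" and U Y1 :: "'s \<Rightarrow> real"
  assumes M: "prob_space M" and U[measurable]: "U \<in> borel_measurable M"
    and Y[measurable]: "Y1 \<in> borel_measurable M"
    and dU: "distr M lborel U = U01" and qm[measurable]: "q \<in> borel_measurable borel"
    and q: "\<And>u x. 0 < u \<Longrightarrow> u \<le> x \<Longrightarrow> x < 1 \<Longrightarrow> q u \<le> q x"
    and ab: "0 \<le> a" "a < b" "b \<le> 1"
  shows "L1 (\<lambda>x. cdf (distr M borel Y1) (q x)) a b \<le> measure M {\<omega>\<in>space M. a < U \<omega> \<and> U \<omega> < b \<and> q (U \<omega>) < Y1 \<omega>}"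
    and "measure M {\<omega>\<in>space M. a < U \<omega> \<and> U \<omega> < b \<and> q (U \<omega>) < Y1 \<omega>} \<le> b - a - L2 (\<lambda>x. cdf (distr M borel Y1) (q x)) a b"
    and "L2 (\<lambda>x. measure (distr M borel Y1) {..<q x}) a b \<le> measure M {\<omega>\<in>space M. a < U \<omega> \<and> U \<omega> < b \<and> q (U \<omega>) > Y1 \<omega>}"
    and "measure M {\<omega>\<in>space M. a < U \<omega> \<and> U \<omega> < b \<and> q (U \<omega>) > Y1 \<omega>} \<le> b - a - L1 (\<lambda>x. measure (distr M borel Y1) {..<q x}) a b"
proof -
  interpret prob_space M by fact
  have tot: "measure M {\<omega>\<in>space M. a < U \<omega> \<and> U \<omega> < b} = b - a"
    using measure_U_Ioo[OF M U dU, of a b] ab by simp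
  have sp1: "measure M {\<omega>\<in>space M. a < U \<omega> \<and> U \<omega> < b \<and> q (U \<omega>) < Y1 \<omega>} +
      measure M {\<omega>\<in>space M. a < U \<omega> \<and> U \<omega> < b \<and> Y1 \<omega> \<le> q (U \<omega>)} = b - a"
    using measure_split2[OF M, of "\<lambda>\<omega>. a < U \<omega> \<and> U \<omega> < b" "\<lambda>\<omega>. q (U \<omega>) < Y1 \<omega>"] tot
    by (simp add: not_less conj_assoc)
  have sp2: "measure M {\<omega>\<in>space M. a < U \<omega> \<and> U \<omega> < b \<and> q (U \<omega>) > Y1 \<omega>} +
      measure M {\<omega>\<in>space M. a < U \<omega> \<and> U \<omega> < b \<and> Y1 \<omega> \<ge> q (U \<omega>)} = b - a"
    using measure_split2[OF M, of "\<lambda>\<omega>. a < U \<omega> \<and> U \<omega> < b" "\<lambda>\<omega>. q (U \<omega>) > Y1 \<omega>"] tot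
    by (simp add: not_less conj_assoc)
  show "L1 (\<lambda>x. cdf (distr M borel Y1) (q x)) a b \<le> measure M {\<omega>\<in>space M. a < U \<omega> \<and> U \<omega> < b \<and> q (U \<omega>) < Y1 \<omega>}"
    by (rule L1_least) (use ab ineq_core(1)[OF M U Y dU qm q] in auto)
  have "L2 (\<lambda>x. cdf (distr M borel Y1) (q x)) a b \<le> measure M {\<omega>\<in>space M. a < U \<omega> \<and> U \<omega> < b \<and> Y1 \<omega> \<le> q (U \<omega>)}"
    by (rule L2_least) (use ab ineq_core(2)[OF M U Y dU qm q] in auto)
  then show "measure M {\<omega>\<in>space M. a < U \<omega> \<and> U \<omega> < b \<and> q (U \<omega>) < Y1 \<omega>} \<le> b - a - L2 (\<lambda>x. cdf (distr M borel Y1) (q x)) a b"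
    using sp1 by simp
  show "L2 (\<lambda>x. measure (distr M borel Y1) {..<q x}) a b \<le> measure M {\<omega>\<in>space M. a < U \<omega> \<and> U \<omega> < b \<and> q (U \<omega>) > Y1 \<omega>}"
    by (rule L2_least) (use ab ineq_core(3)[OF M U Y dU qm q] in auto)
  have "L1 (\<lambda>x. measure (distr M borel Y1) {..<q x}) a b \<le> measure M {\<omega>\<in>space M. a < U \<omega> \<and> U \<omega> < b \<and> Y1 \<omega> \<ge> q (U \<omega>)}"
    by (rule L1_least) (use ab ineq_core(4)[OF M U Y dU qm q] in auto)
  then show "measure M {\<omega>\<in>space M. a < U \<omega> \<and> U \<omega> < b \<and> q (U \<omega>) > Y1 \<omega>} \<le> b - a - L1 (\<lambda>x. measure (distr M borel Y1) {..<q x}) a b"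
    using sp2 by simp
qed



lemma measure_U01_Icc: "0 \<le> c \<Longrightarrow> c \<le> d \<Longrightarrow> d \<le> 1 \<Longrightarrow> measure U01 {c..d} = d - c"
proof -
  assume h: "0 \<le> c" "c \<le> d" "d \<le> 1"
  then have "{0..1} \<inter> {c..d} = {c..d}" by auto
  then show ?thesis using h by (simp add: measure_U01)
qed

lemma coupling:
  fixes q Q \<sigma> :: "real \<Rightarrow> real"
  assumes D1: "real_distribution D1"
    and sm[measurable]: "\<sigma> \<in> borel_measurable borel" and sp: "distr U01 borel \<sigma> = U01"
    and Qm[measurable]: "Q \<in> borel_measurable borel"
    and Q1: "\<And>v y. 0 < v \<Longrightarrow> v < 1 \<Longrightarrow> v < cdf D1 y \<Longrightarrow> Q v \<le> y"
    and Q2: "\<And>v y. 0 < v \<Longrightarrow> v < 1 \<Longrightarrow> Q v \<le> y \<Longrightarrow> v \<le> cdf D1 y"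
    and qm[measurable]: "q \<in> borel_measurable borel"
    and q: "\<And>u x. 0 < u \<Longrightarrow> u \<le> x \<Longrightarrow> x < 1 \<Longrightarrow> q u \<le> q x"
    and ab: "0 \<le> a" "a < b" "b \<le> 1"
  defines "N \<equiv> distr U01 borel (\<lambda>u. (u, Q (\<sigma> u)))"
  shows "joint_with_marginals N D1"
    and "{p. a < fst p \<and> fst p < b \<and> q (fst p) < snd p} \<in> sets N"
    and "{p. a < fst p \<and> fst p < b \<and> q (fst p) > snd p} \<in> sets N"
    and "measure N {p. a < fst p \<and> fst p < b \<and> q (fst p) < snd p} = measure U01 {u. a < u \<and> u < b \<and> q u < Q (\<sigma> u)}"
    and "measure N {p. a < fst p \<and> fst p < b \<and> q (fst p) > snd p} = measure U01 {u. a < u \<and> u < b \<and> q u > Q (\<sigma> u)}"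
    and "L1 (\<lambda>x. cdf D1 (q x)) a b \<le> measure U01 {u. a < u \<and> u < b \<and> q u < Q (\<sigma> u)}"
    and "measure U01 {u. a < u \<and> u < b \<and> q u < Q (\<sigma> u)} \<le> b - a - L2 (\<lambda>x. cdf D1 (q x)) a b"
    and "L2 (\<lambda>x. measure D1 {..<q x}) a b \<le> measure U01 {u. a < u \<and> u < b \<and> q u > Q (\<sigma> u)}"
    and "measure U01 {u. a < u \<and> u < b \<and> q u > Q (\<sigma> u)} \<le> b - a - L1 (\<lambda>x. measure D1 {..<q x}) a b"
proof -
  interpret P: prob_space U01 by (rule U01_prob)
  have pm[measurable]: "(\<lambda>u. (u, Q (\<sigma> u))) \<in> borel_measurable borel" by measurable
  have pm': "(\<lambda>u. (u, Q (\<sigma> u))) \<in> measurable U01 borel"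
    using pm by (simp add: measurable_cong_sets[OF sets_U01 refl])
  have dQ: "distr U01 borel Q = D1" by (rule quantile_distr[OF D1 Qm Q1 Q2])
  have dQs: "distr U01 borel (\<lambda>u. Q (\<sigma> u)) = D1"
  proof -
    have "distr U01 borel (\<lambda>u. Q (\<sigma> u)) = distr U01 borel (Q \<circ> \<sigma>)" by (simp add: comp_def)
    also have "\<dots> = distr (distr U01 borel \<sigma>) borel Q" by (subst distr_distr) auto
    also have "\<dots> = D1" using sp dQ by simp
    finally show ?thesis .
  qed
  show "joint_with_marginals N D1"
    unfolding joint_with_marginals_def
  proof (intro conjI)
    show "prob_space N" unfolding N_def by (rule P.prob_space_distr[OF pm'])
    show "sets N = sets borel" unfolding N_def by simp
    have fm: "fst \<in> measurable (borel :: (real \<times> real) measure) lborel"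
      by (simp add: measurable_cong_sets[OF refl sets_lborel] borel_measurable_continuous_onI continuous_on_fst continuous_on_id)
    have "distr N lborel fst = distr U01 lborel (fst \<circ> (\<lambda>u. (u, Q (\<sigma> u))))"
      unfolding N_def by (subst distr_distr[OF fm pm']) simp
    also have "\<dots> = distr U01 lborel (\<lambda>u. u)" by (simp add: comp_def)
    also have "\<dots> = U01" by (rule distr_id2) simp
    finally show "distr N lborel fst = U01" .
    have sm: "snd \<in> borel_measurable (borel :: (real \<times> real) measure)"
      by (simp add: borel_measurable_continuous_onI continuous_on_snd continuous_on_id)
    have "distr N borel snd = distr U01 borel (snd \<circ> (\<lambda>u. (u, Q (\<sigma> u))))"
      unfolding N_def by (subst distr_distr[OF sm pm']) simp
    also have "\<dots> = distr U01 borel (\<lambda>u. Q (\<sigma> u))" by (simp add: comp_def)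
    finally show "distr N borel snd = D1" using dQs by simp
  qed
  have "Measurable.pred (borel \<Otimes>\<^sub>M borel) (\<lambda>p::real\<times>real. a < fst p \<and> fst p < b \<and> q (fst p) < snd p)"
    by measurable
  then have S1: "{p. a < fst p \<and> fst p < b \<and> q (fst p) < snd p} \<in> sets borel"
    by (simp add: borel_prod pred_def)
  then show "{p. a < fst p \<and> fst p < b \<and> q (fst p) < snd p} \<in> sets N" unfolding N_def by simp
  have "Measurable.pred (borel \<Otimes>\<^sub>M borel) (\<lambda>p::real\<times>real. a < fst p \<and> fst p < b \<and> q (fst p) > snd p)"
    by measurable
  then have S2: "{p. a < fst p \<and> fst p < b \<and> q (fst p) > snd p} \<in> sets borel"
    by (simp add: borel_prod pred_def)
  then show "{p. a < fst p \<and> fst p < b \<and> q (fst p) > snd p} \<in> sets N" unfolding N_def by simp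
  show "measure N {p. a < fst p \<and> fst p < b \<and> q (fst p) < snd p} = measure U01 {u. a < u \<and> u < b \<and> q u < Q (\<sigma> u)}"
    unfolding N_def using measure_distr[OF pm' S1] by (simp add: vimage_def)
  show "measure N {p. a < fst p \<and> fst p < b \<and> q (fst p) > snd p} = measure U01 {u. a < u \<and> u < b \<and> q u > Q (\<sigma> u)}"
    unfolding N_def using measure_distr[OF pm' S2] by (simp add: vimage_def)
  have Um: "(\<lambda>u. u) \<in> borel_measurable U01" by (simp add: measurable_cong_sets[OF sets_U01 refl])
  have Ym: "(\<lambda>u. Q (\<sigma> u)) \<in> borel_measurable U01" using pm by (simp add: measurable_cong_sets[OF sets_U01 refl])
  have dU: "distr U01 lborel (\<lambda>u. u) = U01" by (rule distr_id2) simp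
  note I = ineq_all[OF U01_prob Um Ym dU qm q ab, unfolded dQs space_U01]
  show "L1 (\<lambda>x. cdf D1 (q x)) a b \<le> measure U01 {u. a < u \<and> u < b \<and> q u < Q (\<sigma> u)}" using I(1) by simp
  show "measure U01 {u. a < u \<and> u < b \<and> q u < Q (\<sigma> u)} \<le> b - a - L2 (\<lambda>x. cdf D1 (q x)) a b" using I(2) by simp
  show "L2 (\<lambda>x. measure D1 {..<q x}) a b \<le> measure U01 {u. a < u \<and> u < b \<and> q u > Q (\<sigma> u)}" using I(3) by simp
  show "measure U01 {u. a < u \<and> u < b \<and> q u > Q (\<sigma> u)} \<le> b - a - L1 (\<lambda>x. measure D1 {..<q x}) a b" using I(4) by simp
qed



lemma pred_borel_sets: "Measurable.pred borel P \<Longrightarrow> {x::real. P x} \<in> sets U01"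
  by (simp add: pred_def)

lemma good_cong:
  assumes "good_bound B" and "\<And>a b. 0 \<le> a \<Longrightarrow> a < b \<Longrightarrow> b \<le> 1 \<Longrightarrow> B' a b = B a b"
  shows "good_bound B'"
  unfolding good_bound_def
proof (intro conjI allI impI)
  fix a a' b :: real assume h: "0 \<le> a \<and> a \<le> a' \<and> a' < b \<and> b \<le> 1"
  then have "B a' b \<le> B a b \<and> B a b \<le> B a' b + (a' - a)" using assms(1) unfolding good_bound_def by blast
  moreover have "B' a b = B a b" "B' a' b = B a' b" using h assms(2) by auto
  ultimately show "B' a' b \<le> B' a b" "B' a b \<le> B' a' b + (a' - a)" by auto
next
  fix a b b' :: real assume h: "0 \<le> a \<and> a < b \<and> b \<le> b' \<and> b' \<le> 1"
  then have "B a b \<le> B a b' \<and> B a b' \<le> B a b + (b' - b)" using assms(1) unfolding good_bound_def by blast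
  moreover have "B' a b = B a b" "B' a b' = B a b'" using h assms(2) by auto
  ultimately show "B' a b \<le> B' a b'" "B' a b' \<le> B' a b + (b' - b)" by auto
qed

theorem theoremA4:
  fixes M :: "'s measure" and Y0 Y1 U :: "'s \<Rightarrow> real"
  defines "F0 \<equiv> cdf (distr M borel Y0)"
      and "F1 \<equiv> cdf (distr M borel Y1)"
  assumes "prob_space M"
      and "Y0 \<in> borel_measurable M" and "Y1 \<in> borel_measurable M" and "U \<in> borel_measurable M"
      and "distr M lborel U = uniform_measure lborel {0..1}"
      and "AE \<omega> in M. Y0 \<omega> = gen_inv F0 (U \<omega>)"
  shows
    "(\<forall>a b. 0 \<le> a \<and> a < b \<and> b \<le> 1 \<longrightarrow>
        lower_lt F0 F1 a b \<le> measure M {\<omega>\<in>space M. a < U \<omega> \<and> U \<omega> < b \<and> Y0 \<omega> < Y1 \<omega>} \<and>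
        measure M {\<omega>\<in>space M. a < U \<omega> \<and> U \<omega> < b \<and> Y0 \<omega> < Y1 \<omega>} \<le> upper_lt F0 F1 a b \<and>
        lower_gt F0 F1 a b \<le> measure M {\<omega>\<in>space M. a < U \<omega> \<and> U \<omega> < b \<and> Y0 \<omega> > Y1 \<omega>} \<and>
        measure M {\<omega>\<in>space M. a < U \<omega> \<and> U \<omega> < b \<and> Y0 \<omega> > Y1 \<omega>} \<le> upper_gt F0 F1 a b)
     \<and>
     (\<forall>a b. 0 \<le> a \<and> a < b \<and> b \<le> 1 \<longrightarrow>
        (\<exists>N. joint_with_marginals N (distr M borel Y1) \<and>
             {p. a < fst p \<and> fst p < b \<and> gen_inv F0 (fst p) < snd p} \<in> sets N \<and>
             measure N {p. a < fst p \<and> fst p < b \<and> gen_inv F0 (fst p) < snd p} = lower_lt F0 F1 a b) \<and>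
        (\<exists>N. joint_with_marginals N (distr M borel Y1) \<and>
             {p. a < fst p \<and> fst p < b \<and> gen_inv F0 (fst p) > snd p} \<in> sets N \<and>
             measure N {p. a < fst p \<and> fst p < b \<and> gen_inv F0 (fst p) > snd p} = lower_gt F0 F1 a b) \<and>
        (\<forall>\<epsilon>>0. \<exists>N. joint_with_marginals N (distr M borel Y1) \<and>
             {p. a < fst p \<and> fst p < b \<and> gen_inv F0 (fst p) < snd p} \<in> sets N \<and>
             \<bar>measure N {p. a < fst p \<and> fst p < b \<and> gen_inv F0 (fst p) < snd p} - upper_lt F0 F1 a b\<bar> \<le> \<epsilon>) \<and>
        (\<forall>\<epsilon>>0. \<exists>N. joint_with_marginals N (distr M borel Y1) \<and>
             {p. a < fst p \<and> fst p < b \<and> gen_inv F0 (fst p) > snd p} \<in> sets N \<and>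
             \<bar>measure N {p. a < fst p \<and> fst p < b \<and> gen_inv F0 (fst p) > snd p} - upper_gt F0 F1 a b\<bar> \<le> \<epsilon>))
     \<and>
     mono_lipschitz_bound (lower_lt F0 F1) \<and> mono_lipschitz_bound (upper_lt F0 F1) \<and>
     mono_lipschitz_bound (lower_gt F0 F1) \<and> mono_lipschitz_bound (upper_gt F0 F1)"
proof -
  have Mp: "prob_space M" by fact
  interpret P: prob_space M by (rule Mp)
  have Y0m[measurable]: "Y0 \<in> borel_measurable M" by fact
  have Y1m[measurable]: "Y1 \<in> borel_measurable M" by fact
  have Um[measurable]: "U \<in> borel_measurable M" by fact
  have dU: "distr M lborel U = U01" by fact
  have AEY: "AE \<omega> in M. Y0 \<omega> = gen_inv F0 (U \<omega>)" by fact
  define D0 where "D0 = distr M borel Y0"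
  define D1 where "D1 = distr M borel Y1"
  have D0r: "real_distribution D0" unfolding D0_def by simp
  have D1r: "real_distribution D1" unfolding D1_def by simp
  interpret R1: real_distribution D1 by (rule D1r)
  have F0D: "F0 = cdf D0" unfolding F0_def D0_def ..
  have F1D: "F1 = cdf D1" unfolding F1_def D1_def ..
  define q where "q = clean (gen_inv F0)"
  have qmono: "\<And>u x. 0 < u \<Longrightarrow> u \<le> x \<Longrightarrow> x < 1 \<Longrightarrow> q u \<le> q x"
    unfolding q_def F0D by (rule clean_mono[OF gen_inv_mono[OF D0r]])
  have qm[measurable]: "q \<in> borel_measurable borel"
    unfolding q_def F0D by (rule clean_measurable[OF gen_inv_mono[OF D0r]])
  have qeq: "\<And>x. 0 < x \<Longrightarrow> x < 1 \<Longrightarrow> gen_inv F0 x = q x" unfolding q_def by (simp add: clean_eq)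
  define G1 where "G1 = (\<lambda>x. cdf D1 (q x))"
  define G2 where "G2 = (\<lambda>x. measure D1 {..<q x})"
  have G1ok: "Gok G1" unfolding Gok_def G1_def
    using qmono by (auto intro: R1.cdf_nondecreasing R1.cdf_nonneg R1.cdf_bounded_prob)
  have G2ok: "Gok G2" unfolding Gok_def G2_def
    using qmono by (auto intro!: R1.finite_measure_mono)
  have e1: "lower_lt F0 F1 a b = L1 G1 a b" if "0 \<le> a" "b \<le> 1" for a b
    unfolding lower_lt_def L1_def G1_def F1D using that by (intro SUP_cong) (auto simp: qeq)
  have e2: "upper_lt F0 F1 a b = b - a - L2 G1 a b" if "0 \<le> a" "b \<le> 1" for a b
    unfolding upper_lt_def L2_def G1_def F1D using that by (auto intro!: SUP_cong simp: qeq)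
  have e3: "lower_gt F0 F1 a b = L2 G2 a b" if "0 \<le> a" "b \<le> 1" for a b
    unfolding lower_gt_def L2_def G2_def F1D using that
    by (intro SUP_cong) (auto simp: qeq left_lim_cdf[OF D1r])
  have e4: "upper_gt F0 F1 a b = b - a - L1 G2 a b" if "0 \<le> a" "b \<le> 1" for a b
    unfolding upper_gt_def L1_def G2_def F1D using that
    by (auto intro!: SUP_cong simp: qeq left_lim_cdf[OF D1r])
  show ?thesis
  proof (intro conjI)
    show "\<forall>a b. 0 \<le> a \<and> a < b \<and> b \<le> 1 \<longrightarrow>
        lower_lt F0 F1 a b \<le> measure M {\<omega>\<in>space M. a < U \<omega> \<and> U \<omega> < b \<and> Y0 \<omega> < Y1 \<omega>} \<and>
        measure M {\<omega>\<in>space M. a < U \<omega> \<and> U \<omega> < b \<and> Y0 \<omega> < Y1 \<omega>} \<le> upper_lt F0 F1 a b \<and>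
        lower_gt F0 F1 a b \<le> measure M {\<omega>\<in>space M. a < U \<omega> \<and> U \<omega> < b \<and> Y0 \<omega> > Y1 \<omega>} \<and>
        measure M {\<omega>\<in>space M. a < U \<omega> \<and> U \<omega> < b \<and> Y0 \<omega> > Y1 \<omega>} \<le> upper_gt F0 F1 a b"
    proof (intro allI impI)
      fix a b :: real assume h: "0 \<le> a \<and> a < b \<and> b \<le> 1"
      then have ab: "0 \<le> a" "a < b" "b \<le> 1" by auto
      note I = ineq_all[OF Mp Um Y1m dU qm qmono ab, folded D1_def G1_def G2_def]
      have m1: "measure M {\<omega>\<in>space M. a < U \<omega> \<and> U \<omega> < b \<and> Y0 \<omega> < Y1 \<omega>} =
                measure M {\<omega>\<in>space M. a < U \<omega> \<and> U \<omega> < b \<and> q (U \<omega>) < Y1 \<omega>}"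
      proof (rule measure_eq_AE)
        show "AE \<omega> in M. (\<omega> \<in> {\<omega>\<in>space M. a < U \<omega> \<and> U \<omega> < b \<and> Y0 \<omega> < Y1 \<omega>}) =
                (\<omega> \<in> {\<omega>\<in>space M. a < U \<omega> \<and> U \<omega> < b \<and> q (U \<omega>) < Y1 \<omega>})"
          using AEY by eventually_elim (use ab in \<open>auto simp: qeq\<close>)
      qed measurable
      have m2: "measure M {\<omega>\<in>space M. a < U \<omega> \<and> U \<omega> < b \<and> Y0 \<omega> > Y1 \<omega>} =
                measure M {\<omega>\<in>space M. a < U \<omega> \<and> U \<omega> < b \<and> q (U \<omega>) > Y1 \<omega>}"
      proof (rule measure_eq_AE)
        show "AE \<omega> in M. (\<omega> \<in> {\<omega>\<in>space M. a < U \<omega> \<and> U \<omega> < b \<and> Y0 \<omega> > Y1 \<omega>}) =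
                (\<omega> \<in> {\<omega>\<in>space M. a < U \<omega> \<and> U \<omega> < b \<and> q (U \<omega>) > Y1 \<omega>})"
          using AEY by eventually_elim (use ab in \<open>auto simp: qeq\<close>)
      qed measurable
      show "lower_lt F0 F1 a b \<le> measure M {\<omega>\<in>space M. a < U \<omega> \<and> U \<omega> < b \<and> Y0 \<omega> < Y1 \<omega>} \<and>
        measure M {\<omega>\<in>space M. a < U \<omega> \<and> U \<omega> < b \<and> Y0 \<omega> < Y1 \<omega>} \<le> upper_lt F0 F1 a b \<and>
        lower_gt F0 F1 a b \<le> measure M {\<omega>\<in>space M. a < U \<omega> \<and> U \<omega> < b \<and> Y0 \<omega> > Y1 \<omega>} \<and>
        measure M {\<omega>\<in>space M. a < U \<omega> \<and> U \<omega> < b \<and> Y0 \<omega> > Y1 \<omega>} \<le> upper_gt F0 F1 a b"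
        using I m1 m2 e1[OF ab(1,3)] e2[OF ab(1,3)] e3[OF ab(1,3)] e4[OF ab(1,3)] by (simp add: G2_def)
    qed
  next
    show "\<forall>a b. 0 \<le> a \<and> a < b \<and> b \<le> 1 \<longrightarrow> (\<exists>N. joint_with_marginals N (distr M borel Y1) \<and>
                   {p. a < fst p \<and> fst p < b \<and> gen_inv F0 (fst p) < snd p} \<in> sets N \<and>
                   measure N {p. a < fst p \<and> fst p < b \<and> gen_inv F0 (fst p) < snd p} = lower_lt F0 F1 a b) \<and>
              (\<exists>N. joint_with_marginals N (distr M borel Y1) \<and>
                   {p. a < fst p \<and> fst p < b \<and> gen_inv F0 (fst p) > snd p} \<in> sets N \<and>
                   measure N {p. a < fst p \<and> fst p < b \<and> gen_inv F0 (fst p) > snd p} = lower_gt F0 F1 a b) \<and>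
              (\<forall>\<epsilon>>0. \<exists>N. joint_with_marginals N (distr M borel Y1) \<and>
                   {p. a < fst p \<and> fst p < b \<and> gen_inv F0 (fst p) < snd p} \<in> sets N \<and>
                   \<bar>measure N {p. a < fst p \<and> fst p < b \<and> gen_inv F0 (fst p) < snd p} - upper_lt F0 F1 a b\<bar> \<le> \<epsilon>) \<and>
              (\<forall>\<epsilon>>0. \<exists>N. joint_with_marginals N (distr M borel Y1) \<and>
                   {p. a < fst p \<and> fst p < b \<and> gen_inv F0 (fst p) > snd p} \<in> sets N \<and>
                   \<bar>measure N {p. a < fst p \<and> fst p < b \<and> gen_inv F0 (fst p) > snd p} - upper_gt F0 F1 a b\<bar> \<le> \<epsilon>)"
    proof (intro allI impI)
      fix a b :: real assume h: "0 \<le> a \<and> a < b \<and> b \<le> 1"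
      then have ab: "0 \<le> a" "a < b" "b \<le> 1" by auto
      have SL: "{p. a < fst p \<and> fst p < b \<and> gen_inv F0 (fst p) < snd p} = {p. a < fst p \<and> fst p < b \<and> q (fst p) < snd p}"
        using ab by (auto simp: qeq)
      have SG: "{p. a < fst p \<and> fst p < b \<and> gen_inv F0 (fst p) > snd p} = {p. a < fst p \<and> fst p < b \<and> q (fst p) > snd p}"
        using ab by (auto simp: qeq)
      define Qa where "Qa = clean (gen_inv (cdf D1))"
      define Qb where "Qb = clean (Qp D1)"
      have Qam: "Qa \<in> borel_measurable borel" unfolding Qa_def by (rule clean_measurable[OF gen_inv_mono[OF D1r]])
      have Qbm: "Qb \<in> borel_measurable borel" unfolding Qb_def by (rule clean_measurable[OF Qp_mono[OF D1r]])
      have Qa1: "\<And>v y. 0 < v \<Longrightarrow> v < 1 \<Longrightarrow> v < cdf D1 y \<Longrightarrow> Qa v \<le> y"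
        unfolding Qa_def by (simp add: clean_eq gen_inv_le[OF D1r])
      have Qa2: "\<And>v y. 0 < v \<Longrightarrow> v < 1 \<Longrightarrow> Qa v \<le> y \<Longrightarrow> v \<le> cdf D1 y"
        unfolding Qa_def by (simp add: clean_eq gen_inv_le_rev[OF D1r])
      have Qb1: "\<And>v y. 0 < v \<Longrightarrow> v < 1 \<Longrightarrow> v < cdf D1 y \<Longrightarrow> Qb v \<le> y"
        unfolding Qb_def by (simp add: clean_eq Qp_le[OF D1r])
      have Qb2: "\<And>v y. 0 < v \<Longrightarrow> v < 1 \<Longrightarrow> Qb v \<le> y \<Longrightarrow> v \<le> cdf D1 y"
        unfolding Qb_def by (simp add: clean_eq Qp_le_rev[OF D1r])
      interpret PU: prob_space U01 by (rule U01_prob)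
      note [measurable] = Qam Qbm
      have L1G1: "0 \<le> L1 G1 a b" "L1 G1 a b \<le> b - a" using L1_nonneg[OF G1ok ab(2)] L1_le[OF G1ok ab(2)] by auto
      have L2G1: "0 \<le> L2 G1 a b" "L2 G1 a b \<le> b - a" using L2_nonneg[OF G1ok ab(2)] L2_le[OF G1ok ab(2)] by auto
      have L1G2: "0 \<le> L1 G2 a b" "L1 G2 a b \<le> b - a" using L1_nonneg[OF G2ok ab(2)] L1_le[OF G2ok ab(2)] by auto
      have L2G2: "0 \<le> L2 G2 a b" "L2 G2 a b \<le> b - a" using L2_nonneg[OF G2ok ab(2)] L2_le[OF G2ok ab(2)] by auto
      note CA = coupling[OF D1r _ _ Qam Qa1 Qa2 qm qmono ab, folded G1_def G2_def]
      note CB = coupling[OF D1r _ _ Qbm Qb1 Qb2 qm qmono ab, folded G1_def G2_def]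
      have C0': "distr U01 borel (sigA a b 0) = U01" using sigA_pres[of a 0 b] ab by simp
      note CA0 = CA[OF sigA_measurable C0']
      show "(\<exists>N. joint_with_marginals N (distr M borel Y1) \<and>
                     {p. a < fst p \<and> fst p < b \<and> gen_inv F0 (fst p) < snd p} \<in> sets N \<and>
                     measure N {p. a < fst p \<and> fst p < b \<and> gen_inv F0 (fst p) < snd p} = lower_lt F0 F1 a b) \<and>
                (\<exists>N. joint_with_marginals N (distr M borel Y1) \<and>
                     {p. a < fst p \<and> fst p < b \<and> gen_inv F0 (fst p) > snd p} \<in> sets N \<and>
                     measure N {p. a < fst p \<and> fst p < b \<and> gen_inv F0 (fst p) > snd p} = lower_gt F0 F1 a b) \<and>
                (\<forall>\<epsilon>>0. \<exists>N. joint_with_marginals N (distr M borel Y1) \<and>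
                     {p. a < fst p \<and> fst p < b \<and> gen_inv F0 (fst p) < snd p} \<in> sets N \<and>
                     \<bar>measure N {p. a < fst p \<and> fst p < b \<and> gen_inv F0 (fst p) < snd p} - upper_lt F0 F1 a b\<bar> \<le> \<epsilon>) \<and>
                (\<forall>\<epsilon>>0. \<exists>N. joint_with_marginals N (distr M borel Y1) \<and>
                     {p. a < fst p \<and> fst p < b \<and> gen_inv F0 (fst p) > snd p} \<in> sets N \<and>
                     \<bar>measure N {p. a < fst p \<and> fst p < b \<and> gen_inv F0 (fst p) > snd p} - upper_gt F0 F1 a b\<bar> \<le> \<epsilon>)"
        unfolding SL SG D1_def[symmetric] e1[OF ab(1,3)] e2[OF ab(1,3)] e3[OF ab(1,3)] e4[OF ab(1,3)]
      proof (intro conjI allI impI)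
        define s where "s = L1 G1 a b"
        have C': "distr U01 borel (sigA a b s) = U01" using sigA_pres[of a s b] L1G1 ab by (simp add: s_def)
        note C = CA[OF sigA_measurable C']
        have "measure U01 {u. a < u \<and> u < b \<and> q u < Qa (sigA a b s u)} \<le> measure U01 {a..a+s}"
        proof (rule PU.finite_measure_mono)
          show "{u. a < u \<and> u < b \<and> q u < Qa (sigA a b s u)} \<subseteq> {a..a+s}"
          proof
            fix u assume "u \<in> {u. a < u \<and> u < b \<and> q u < Qa (sigA a b s u)}"
            then have u: "a < u" "u < b" "q u < Qa (sigA a b s u)" by auto
            have "u \<le> a + s"
            proof (rule ccontr)
              assume "\<not> u \<le> a + s"
              then have us: "a + s < u" by simp
              have s0: "0 \<le> s" using L1G1 by (simp add: s_def)
              have sv: "sigA a b s u = u - a - s" by (rule sigA_val[OF s0 us u(2)])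
              have "u - a - G1 u \<le> s" unfolding s_def by (rule L1_up[OF G1ok u(1,2)])
              then have "u - a - s \<le> cdf D1 (q u)" by (simp add: G1_def)
              then have "Qa (u - a - s) \<le> q u" unfolding Qa_def using us u ab s0
                by (subst clean_eq) (auto intro: gen_inv_le[OF D1r])
              then show False using u(3) sv by simp
            qed
            then show "u \<in> {a..a+s}" using u by simp
          qed
        qed simp
        also have "\<dots> = s" using measure_U01_Icc[of a "a+s"] L1G1 ab by (simp add: s_def)
        finally have up: "measure U01 {u. a < u \<and> u < b \<and> q u < Qa (sigA a b s u)} \<le> s" .
        show "\<exists>N. joint_with_marginals N D1 \<and> {p. a < fst p \<and> fst p < b \<and> q (fst p) < snd p} \<in> sets N \<and>
             measure N {p. a < fst p \<and> fst p < b \<and> q (fst p) < snd p} = L1 G1 a b"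
          using C(1,2,4,6) up unfolding s_def by (intro exI conjI) auto
      next
        define s where "s = L2 G2 a b"
        have C': "distr U01 borel (sigB a b s) = U01" using sigB_pres[of a s b] L2G2 ab by (simp add: s_def)
        note C = CB[OF sigB_measurable C']
        have "measure U01 {u. a < u \<and> u < b \<and> q u > Qb (sigB a b s u)} \<le> measure U01 {b-s..b}"
        proof (rule PU.finite_measure_mono)
          show "{u. a < u \<and> u < b \<and> q u > Qb (sigB a b s u)} \<subseteq> {b-s..b}"
          proof
            fix u assume "u \<in> {u. a < u \<and> u < b \<and> q u > Qb (sigB a b s u)}"
            then have u: "a < u" "u < b" "q u > Qb (sigB a b s u)" by auto
            have "b - s \<le> u"
            proof (rule ccontr)
              assume "\<not> b - s \<le> u"
              then have us: "u < b - s" by simp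
              have s0: "0 \<le> s" using L2G2 by (simp add: s_def)
              have sv: "sigB a b s u = u + 1 - b + s" by (rule sigB_val[OF s0 u(1) us ab(3)])
              have "b - u - 1 + G2 u \<le> s" unfolding s_def by (rule L2_up[OF G2ok u(1,2)])
              then have g: "measure D1 {..<q u} \<le> u + 1 - b + s" by (simp add: G2_def)
              have "q u \<le> Qp D1 (u + 1 - b + s)"
              proof (rule Qp_ge[OF D1r])
                show "u + 1 - b + s < 1" using us by simp
                fix z assume "z < q u"
                then show "cdf D1 z \<le> u + 1 - b + s" using cdfm_mono[OF D1r, of z "q u"] g by simp
              qed
              moreover have "Qb (u + 1 - b + s) = Qp D1 (u + 1 - b + s)"
                unfolding Qb_def using us u ab s0 by (subst clean_eq) auto
              ultimately show False using u(3) sv by simp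
            qed
            then show "u \<in> {b-s..b}" using u by simp
          qed
        qed simp
        also have "\<dots> = s" using measure_U01_Icc[of "b-s" b] L2G2 ab by (simp add: s_def)
        finally have up: "measure U01 {u. a < u \<and> u < b \<and> q u > Qb (sigB a b s u)} \<le> s" .
        show "\<exists>N. joint_with_marginals N D1 \<and> {p. a < fst p \<and> fst p < b \<and> q (fst p) > snd p} \<in> sets N \<and>
             measure N {p. a < fst p \<and> fst p < b \<and> q (fst p) > snd p} = L2 G2 a b"
          using C(1,3,5,8) up unfolding s_def by (intro exI conjI) auto
      next
        fix \<epsilon> :: real assume e: "0 < \<epsilon>"
        show "\<exists>N. joint_with_marginals N D1 \<and> {p. a < fst p \<and> fst p < b \<and> q (fst p) < snd p} \<in> sets N \<and>
             \<bar>measure N {p. a < fst p \<and> fst p < b \<and> q (fst p) < snd p} - (b - a - L2 G1 a b)\<bar> \<le> \<epsilon>"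
        proof (cases "b - a \<le> L2 G1 a b + \<epsilon>")
          case True
          have m0: "0 \<le> measure U01 {u. a < u \<and> u < b \<and> q u < Qa (sigA a b 0 u)}" by (rule measure_nonneg)
          have key: "\<bar>measure U01 {u. a < u \<and> u < b \<and> q u < Qa (sigA a b 0 u)} - (b - a - L2 G1 a b)\<bar> \<le> \<epsilon>"
            using m0 CA0(7) True by linarith
          show ?thesis using CA0(1,2,4) key by (intro exI[of _ "distr U01 borel (\<lambda>u. (u, Qa (sigA a b 0 u)))"] conjI) auto
        next
          case False
          define s where "s = L2 G1 a b + \<epsilon>"
          have s0: "0 \<le> s" "s \<le> b - a" using False L2G1 e by (auto simp: s_def)
          have C': "distr U01 borel (sigB a b s) = U01" using sigB_pres[of a s b] s0 ab by simp
          note C = CB[OF sigB_measurable C']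
          have "measure U01 {a<..<b-s} \<le> measure U01 {u. a < u \<and> u < b \<and> q u < Qb (sigB a b s u)}"
          proof (rule PU.finite_measure_mono)
            show "{a<..<b-s} \<subseteq> {u. a < u \<and> u < b \<and> q u < Qb (sigB a b s u)}"
            proof
              fix u assume "u \<in> {a<..<b-s}"
              then have u: "a < u" "u < b - s" by auto
              have sv: "sigB a b s u = u + 1 - b + s" by (rule sigB_val[OF s0(1) u ab(3)])
              have "b - u - 1 + G1 u \<le> L2 G1 a b" by (rule L2_up[OF G1ok u(1)]) (use u s0 in simp)
              then have g: "cdf D1 (q u) < u + 1 - b + s" using e by (simp add: G1_def s_def)
              have v: "0 < u + 1 - b + s" "u + 1 - b + s < 1" using u ab s0 by auto
              have "\<not> Qp D1 (u + 1 - b + s) \<le> q u"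
                using Qp_le_rev[OF D1r v] g by fastforce
              moreover have "Qb (u + 1 - b + s) = Qp D1 (u + 1 - b + s)"
                unfolding Qb_def using v by (subst clean_eq) auto
              ultimately show "u \<in> {u. a < u \<and> u < b \<and> q u < Qb (sigB a b s u)}" using sv u s0 by simp
            qed
          qed (rule pred_borel_sets, measurable)
          moreover have "measure U01 {a<..<b-s} = b - s - a" using measure_U01_Ioo[of a "b-s"] s0 ab by simp
          ultimately have lo: "b - a - L2 G1 a b - \<epsilon> \<le> measure U01 {u. a < u \<and> u < b \<and> q u < Qb (sigB a b s u)}"
            by (simp add: s_def)
          have key: "\<bar>measure U01 {u. a < u \<and> u < b \<and> q u < Qb (sigB a b s u)} - (b - a - L2 G1 a b)\<bar> \<le> \<epsilon>"
            using lo C(7) by linarith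
          show ?thesis using C(1,2,4) key by (intro exI[of _ "distr U01 borel (\<lambda>u. (u, Qb (sigB a b s u)))"] conjI) auto
        qed
      next
        fix \<epsilon> :: real assume e: "0 < \<epsilon>"
        show "\<exists>N. joint_with_marginals N D1 \<and> {p. a < fst p \<and> fst p < b \<and> q (fst p) > snd p} \<in> sets N \<and>
             \<bar>measure N {p. a < fst p \<and> fst p < b \<and> q (fst p) > snd p} - (b - a - L1 G2 a b)\<bar> \<le> \<epsilon>"
        proof (cases "b - a \<le> L1 G2 a b + \<epsilon>")
          case True
          have m0: "0 \<le> measure U01 {u. a < u \<and> u < b \<and> q u > Qa (sigA a b 0 u)}" by (rule measure_nonneg)
          have key: "\<bar>measure U01 {u. a < u \<and> u < b \<and> q u > Qa (sigA a b 0 u)} - (b - a - L1 G2 a b)\<bar> \<le> \<epsilon>"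
            using m0 CA0(9) True by linarith
          show ?thesis using CA0(1,3,5) key by (intro exI[of _ "distr U01 borel (\<lambda>u. (u, Qa (sigA a b 0 u)))"] conjI) auto
        next
          case False
          define s where "s = L1 G2 a b + \<epsilon>"
          have s0: "0 \<le> s" "s \<le> b - a" using False L1G2 e by (auto simp: s_def)
          have C': "distr U01 borel (sigA a b s) = U01" using sigA_pres[of a s b] s0 ab by simp
          note C = CB[OF sigA_measurable C']
          have "measure U01 {a+s<..<b} \<le> measure U01 {u. a < u \<and> u < b \<and> q u > Qb (sigA a b s u)}"
          proof (rule PU.finite_measure_mono)
            show "{a+s<..<b} \<subseteq> {u. a < u \<and> u < b \<and> q u > Qb (sigA a b s u)}"
            proof
              fix u assume "u \<in> {a+s<..<b}"
              then have u: "a + s < u" "u < b" by auto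
              have sv: "sigA a b s u = u - a - s" by (rule sigA_val[OF s0(1) u])
              have "u - a - G2 u \<le> L1 G2 a b" by (rule L1_up[OF G2ok _ u(2)]) (use u s0 in simp)
              then have g: "u - a - s < measure D1 {..<q u}" using e by (simp add: G2_def s_def)
              have v: "0 < u - a - s" "u - a - s < 1" using u ab s0 by auto
              have "Qp D1 (u - a - s) < q u" by (rule Qp_lt[OF D1r v(1) g])
              moreover have "Qb (u - a - s) = Qp D1 (u - a - s)"
                unfolding Qb_def using v by (subst clean_eq) auto
              ultimately show "u \<in> {u. a < u \<and> u < b \<and> q u > Qb (sigA a b s u)}" using sv u s0 by simp
            qed
          qed (rule pred_borel_sets, measurable)
          moreover have "measure U01 {a+s<..<b} = b - (a + s)" using measure_U01_Ioo[of "a+s" b] s0 ab by simp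
          ultimately have lo: "b - a - L1 G2 a b - \<epsilon> \<le> measure U01 {u. a < u \<and> u < b \<and> q u > Qb (sigA a b s u)}"
            by (simp add: s_def)
          have key: "\<bar>measure U01 {u. a < u \<and> u < b \<and> q u > Qb (sigA a b s u)} - (b - a - L1 G2 a b)\<bar> \<le> \<epsilon>"
            using lo C(9) by linarith
          show ?thesis using C(1,3,5) key by (intro exI[of _ "distr U01 borel (\<lambda>u. (u, Qb (sigA a b s u)))"] conjI) auto
        qed
      qed
    qed
  next
    have gl1: "good_bound (L1 G1)" "good_bound (L2 G1)" "good_bound (L1 G2)" "good_bound (L2 G2)"
      using good_L1 good_L2 G1ok G2ok by auto
    show "mono_lipschitz_bound (lower_lt F0 F1)"
      by (rule good_mono_lip, rule good_cong[OF gl1(1)]) (simp add: e1)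
    show "mono_lipschitz_bound (upper_lt F0 F1)"
      by (rule good_mono_lip, rule good_cong[OF good_compl[OF gl1(2)]]) (simp add: e2)
    show "mono_lipschitz_bound (lower_gt F0 F1)"
      by (rule good_mono_lip, rule good_cong[OF gl1(4)]) (simp add: e3)
    show "mono_lipschitz_bound (upper_gt F0 F1)"
      by (rule good_mono_lip, rule good_cong[OF good_compl[OF gl1(3)]]) (simp add: e4)
  qed
qed

end
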